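(* For every $p>1$ and every bounded open set $\Lambda\subset\mathbb C$, $\dim_H(I_{p,\Lambda})\le 1+1/p$.
   Context: For $\kappa\in\mathbb C$ let $E_\kappa(z)=e^z+\kappa$ and $E^n(\kappa):=E_\kappa^{\circ n}(\kappa)$, an entire function of $\kappa$ with derivative $(E^n)'$ with respect to $\kappa$. $I:=\{\kappa\colon E^n(\kappa)\to\infty\}$. For $p>1$: $P_{p,0}:=\{x+iy\colon x>0,\ |y|<x^{1/p}\}$, and for open $\Lambda$, $I_{p,\Lambda}:=\{\kappa\in\Lambda\cap I\colon |(E^n)'(\kappa)|\to\infty \text{ as } n\to\infty \text{ and } E^n(\kappa)\in P_{p,0} \text{ for all sufficiently large } n\}$. *)

theory Defs
  imports "HOL-Analysis.Analysis"
begin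

definition diam_pow :: "real \<Rightarrow> 'a::metric_space set \<Rightarrow> real" where
  "diam_pow s U = (if U = {} then 0 else if s = 0 then 1 else diameter U powr s)"

definition hausdorff_approx :: "real \<Rightarrow> real \<Rightarrow> 'a::metric_space set \<Rightarrow> ennreal" where
  "hausdorff_approx s \<delta> A =
     (INF U \<in> {U :: nat \<Rightarrow> 'a set. A \<subseteq> (\<Union>i. U i) \<and> (\<forall>i. bounded (U i) \<and> diameter (U i) \<le> \<delta>)}.
        (\<Sum>i. ennreal (diam_pow s (U i))))"

definition hausdorff_outer :: "real \<Rightarrow> 'a::metric_space set \<Rightarrow> ennreal" where
  "hausdorff_outer s A = (SUP \<delta> \<in> {0<..}. hausdorff_approx s \<delta> A)"

definition hausdorff_dim :: "'a::metric_space set \<Rightarrow> ereal" where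
  "hausdorff_dim A = Inf {ereal s | s. 0 \<le> s \<and> hausdorff_outer s A = 0}"

definition Eexp :: "complex \<Rightarrow> complex \<Rightarrow> complex" where
  "Eexp \<kappa> z = exp z + \<kappa>"

definition Eit :: "nat \<Rightarrow> complex \<Rightarrow> complex" where
  "Eit n \<kappa> = (Eexp \<kappa> ^^ n) \<kappa>"

definition escaping :: "complex set" where
  "escaping = {\<kappa>. filterlim (\<lambda>n. Eit n \<kappa>) at_infinity sequentially}"

definition P_region :: "real \<Rightarrow> complex set" where
  "P_region p = {z. 0 < Re z \<and> \<bar>Im z\<bar> < Re z powr (1 / p)}"

definition I_set :: "real \<Rightarrow> complex set \<Rightarrow> complex set" where
  "I_set p \<Lambda> = {\<kappa> \<in> \<Lambda> \<inter> escaping.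
      filterlim (\<lambda>n. norm (deriv (Eit n) \<kappa>)) at_top sequentially \<and>
      (\<forall>\<^sub>F n in sequentially. Eit n \<kappa> \<in> P_region p)}"

end

theory Submission
  imports Defs
begin

lemma x_le_4sin:
  fixes x :: real assumes "0 \<le> x" "x \<le> pi/2" shows "x \<le> 4 * sin x"
proof (cases "x \<le> pi/3")
  case True
  have "(\<lambda>x. 2 * sin x - x) 0 \<le> (\<lambda>x. 2 * sin x - x) x"
  proof (rule DERIV_nonneg_imp_nondecreasing[OF assms(1)])
    fix y :: real assume y: "0 \<le> y" "y \<le> x"
    have "cos (pi/3) \<le> cos y" using y True by (intro cos_monotone_0_pi_le) auto
    then have "0 \<le> 2 * cos y - 1" by (simp add: cos_60)
    moreover have "DERIV (\<lambda>x. 2 * sin x - x) y :> 2 * cos y - 1"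
      by (auto intro!: derivative_eq_intros)
    ultimately show "\<exists>d. DERIV (\<lambda>x. 2 * sin x - x) y :> d \<and> d \<ge> 0" by blast
  qed
  then have "x \<le> 2 * sin x" by simp
  moreover have "0 \<le> sin x" using assms by (intro sin_ge_zero) auto
  ultimately show ?thesis by linarith
next
  case False
  have "sin (pi/3) \<le> sin x" using False assms by (subst sin_mono_le_eq) auto
  then have "sqrt 3 / 2 \<le> sin x" by (simp add: sin_60)
  moreover have "(1::real) \<le> sqrt 3" by simp
  moreover have "pi/2 < 2" using pi_less_4 by simp
  ultimately show ?thesis using assms by linarith
qed

lemma strip_bound:
  fixes t :: real assumes "-pi \<le> t" "t \<le> pi" "0 < cos t"
  shows "\<bar>t\<bar> \<le> 4 * \<bar>sin t\<bar>"
proof -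
  have ct: "cos \<bar>t\<bar> = cos t" by (simp add: abs_if)
  have st: "sin \<bar>t\<bar> = \<bar>sin t\<bar>"
  proof (cases "t \<ge> 0")
    case True then show ?thesis using assms by (simp add: sin_ge_zero)
  next
    case False then have "sin (-t) \<ge> 0" using assms by (intro sin_ge_zero) auto
    then show ?thesis using False by simp
  qed
  have "\<bar>t\<bar> \<le> pi/2"
  proof (rule ccontr)
    assume "\<not> \<bar>t\<bar> \<le> pi/2"
    then have "cos \<bar>t\<bar> \<le> cos (pi/2)" using assms by (intro cos_monotone_0_pi_le) auto
    then show False using ct assms by simp
  qed
  then have "\<bar>t\<bar> \<le> 4 * sin \<bar>t\<bar>" by (intro x_le_4sin) auto
  then show ?thesis using st by simp
qed

lemma norm_exp_bounds':
  fixes z :: complex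
  assumes "norm z \<le> 1 / 2"
  shows   "norm (exp z - 1) \<ge> 1 / 2 * norm z" "norm (exp z - 1) \<le> 3 / 2 * norm z"
proof -
  have *: "norm (exp z - 1 - z) \<le> norm z / 2"
  proof (cases "z = 0")
    case False
    have sums: "(\<lambda>k. z ^ (k + 2) /\<^sub>R fact (k + 2)) sums (exp z - (\<Sum>k<2. z ^ k /\<^sub>R fact k))"
      by (intro sums_split_initial_segment exp_converges)
    have "summable (\<lambda>k. norm z ^ (k + 2) /\<^sub>R fact (k + 2))"
      using summable_norm_exp[of z]
      by (intro summable_norm summable_ignore_initial_segment)
         (auto simp: norm_power norm_divide divide_simps)
    also have "?this \<longleftrightarrow> summable (\<lambda>k. norm z ^ 2 * (norm z ^ k / fact (k +2)))"
      by (simp add: power_add mult_ac divide_simps power2_eq_square del: of_nat_Suc of_nat_add)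
    also have "\<dots> \<longleftrightarrow> summable (\<lambda>k. norm z ^ k / fact (k + 2))"
      by (subst summable_cmult_iff) (use \<open>z \<noteq> 0\<close> in auto)
    finally have summable: "summable (\<lambda>k. norm z ^ k / fact (k + 2))" .
    have "exp z - 1 - z = (\<Sum>k. z ^ (k + 2) / fact (k + 2))"
      using sums by (simp add: sums_iff scaleR_conv_of_real divide_simps eval_nat_numeral)
    also have "norm \<dots> \<le> (\<Sum>k. norm (z ^ (k + 2) / fact (k + 2)))"
      using summable_norm_exp[of z]
      by (intro summable_norm summable_ignore_initial_segment)
         (auto simp: norm_power norm_divide divide_simps)
    also have "\<dots> = (\<Sum>k. norm z ^ 2 * (norm z ^ k / fact (k + 2)))"
      by (simp add: power_add norm_power norm_divide mult_ac norm_mult power2_eq_square del: of_nat_Suc)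
    also have "\<dots> = norm z ^ 2 * (\<Sum>k. norm z ^ k / fact (k + 2))"
      using summable by (rule suminf_mult)
    also have "\<dots> \<le> norm z ^ 2 * (1 / (1 - norm z) / 2)"
    proof (intro mult_left_mono, rule sums_le)
      show "(\<lambda>k. norm z ^ k / fact (k + 2)) sums (\<Sum>k. norm z ^ k / fact (k + 2))"
        using summable by blast
      show "(\<lambda>k. norm z ^ k / 2) sums (1 / (1 - norm z) / 2)"
        using assms by (intro geometric_sums sums_divide) auto
    next
      fix k :: nat
      have "norm z ^ k / fact (k + 2) \<le> norm z ^ k / fact 2"
        by (intro divide_left_mono fact_mono) auto
      thus "norm z ^ k / fact (k + 2) \<le> norm z ^ k / 2"
        by simp
    qed (auto simp: divide_simps)
    also have "\<dots> = norm z * (norm z / (1 - norm z)) / 2"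
      by (simp add: power2_eq_square)
    also have "\<dots> \<le> norm z * ((1 / 2) / (1 - (1 / 2))) / 2"
      using assms by (intro mult_mono frac_le diff_mono) auto
    also have "\<dots> = norm z / 2"
      by simp
    finally show "norm (exp z - 1 - z) \<le> norm z / 2" .
  qed auto
  have "norm (exp z - 1) \<le> norm z + norm (exp z - 1 - z)"
    by (rule norm_triangle_sub)
  with * show "norm (exp z - 1) \<le> 3 / 2 * norm z"
    by simp
  have "norm z - norm (exp z - 1 - z) \<le> norm (exp z - 1)"
    using norm_triangle_ineq3[of "exp z - 1 - z" "-z"] by simp
  with * show "norm (exp z - 1) \<ge> 1 / 2 * norm z"
    by simp
qed

definition hnull :: "real \<Rightarrow> 'a::metric_space set \<Rightarrow> bool" where
  "hnull s A \<longleftrightarrow> (\<forall>\<delta>>0. \<forall>e>0. \<exists>U::nat \<Rightarrow> 'a set. A \<subseteq> (\<Union>i. U i) \<and>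
      (\<forall>i. bounded (U i) \<and> diameter (U i) \<le> \<delta>) \<and> (\<Sum>i. ennreal (diam_pow s (U i))) \<le> ennreal e)"

lemma hnull_outer:
  assumes "hnull s A" shows "hausdorff_outer s A = 0"
proof -
  have "hausdorff_approx s \<delta> A = 0" if "\<delta> > 0" for \<delta>
  proof -
    have *: "hausdorff_approx s \<delta> A \<le> ennreal e" if "e > 0" for e
    proof -
      obtain U where U: "A \<subseteq> (\<Union>i. U i)" "\<forall>i. bounded (U i) \<and> diameter (U i) \<le> \<delta>"
        "(\<Sum>i. ennreal (diam_pow s (U i))) \<le> ennreal e"
        using assms \<open>\<delta> > 0\<close> \<open>e > 0\<close> unfolding hnull_def by blast
      show ?thesis unfolding hausdorff_approx_def
        apply (rule INF_lower2[of U])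
        using U apply blast
        using U(3) apply simp
        done
    qed
    have "hausdorff_approx s \<delta> A \<le> 0"
    proof (rule ennreal_le_epsilon)
      fix e :: real assume "0 < e"
      then show "hausdorff_approx s \<delta> A \<le> 0 + ennreal e" using *[of e] by simp
    qed
    then show ?thesis by simp
  qed
  then show ?thesis unfolding hausdorff_outer_def by simp
qed

lemma hnull_subset:
  assumes "hnull s B" "A \<subseteq> B" shows "hnull s A"
  unfolding hnull_def
proof (intro allI impI)
  fix \<delta> e :: real assume "\<delta> > 0" "e > 0"
  then obtain U where U: "B \<subseteq> (\<Union>i. U i)" "\<forall>i. bounded (U i) \<and> diameter (U i) \<le> \<delta>"
        "(\<Sum>i. ennreal (diam_pow s (U i))) \<le> ennreal e"
    using assms(1) unfolding hnull_def by blast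
  show "\<exists>U. A \<subseteq> (\<Union>i. U i) \<and>
      (\<forall>i. bounded (U i) \<and> diameter (U i) \<le> \<delta>) \<and> (\<Sum>i. ennreal (diam_pow s (U i))) \<le> ennreal e"
    using U assms(2) by (intro exI[of _ U]) auto
qed

lemma hnull_finite_cover:
  fixes A :: "'a::metric_space set"
  assumes "\<And>\<delta> e. \<delta> > 0 \<Longrightarrow> e > 0 \<Longrightarrow> \<exists>(I::'b set) V. finite I \<and> A \<subseteq> (\<Union>i\<in>I. V i) \<and>
       (\<forall>i\<in>I. bounded (V i) \<and> diameter (V i) \<le> \<delta>) \<and> (\<Sum>i\<in>I. diam_pow s (V i)) \<le> e"
    and s: "s \<ge> 0"
  shows "hnull s A"
  unfolding hnull_def
proof (intro allI impI)
  fix \<delta> e :: real assume "\<delta> > 0" "e > 0"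
  then obtain I :: "'b set" and V where I: "finite I" "A \<subseteq> (\<Union>i\<in>I. V i)"
    "\<forall>i\<in>I. bounded (V i) \<and> diameter (V i) \<le> \<delta>" "(\<Sum>i\<in>I. diam_pow s (V i)) \<le> e"
    using assms(1) by meson
  obtain h where h: "bij_betw h {0..<card I} I" using ex_bij_betw_nat_finite[OF I(1)] by blast
  have hI: "h n \<in> I" if "n < card I" for n
    using bij_betwE[OF h] that by simp
  have hs: "\<exists>n<card I. h n = i" if "i \<in> I" for i
  proof -
    have "i \<in> h ` {0..<card I}" using bij_betw_imp_surj_on[OF h] that by simp
    then show ?thesis by auto
  qed
  define U where "U n = (if n < card I then V (h n) else {})" for n
  have nn: "0 \<le> diam_pow s S" for S :: "'a set"
    unfolding diam_pow_def by simp
  have "A \<subseteq> (\<Union>i. U i)"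
  proof
    fix x assume "x \<in> A"
    then obtain i where "i \<in> I" "x \<in> V i" using I(2) by blast
    then obtain n where "n < card I" "h n = i" using hs by blast
    then show "x \<in> (\<Union>i. U i)" using \<open>x \<in> V i\<close> unfolding U_def by auto
  qed
  moreover have "\<forall>i. bounded (U i) \<and> diameter (U i) \<le> \<delta>"
    using I(3) hI \<open>\<delta> > 0\<close> unfolding U_def by auto
  moreover have "(\<Sum>i. ennreal (diam_pow s (U i))) \<le> ennreal e"
  proof -
    have "(\<Sum>i. ennreal (diam_pow s (U i))) = (\<Sum>i\<in>{0..<card I}. ennreal (diam_pow s (U i)))"
      by (rule suminf_finite) (auto simp: U_def diam_pow_def)
    also have "\<dots> = ennreal (\<Sum>i\<in>{0..<card I}. diam_pow s (U i))"
      using nn by (simp add: sum_ennreal)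
    also have "(\<Sum>i\<in>{0..<card I}. diam_pow s (U i)) = (\<Sum>i\<in>{0..<card I}. diam_pow s (V (h i)))"
      unfolding U_def by simp
    also have "\<dots> = (\<Sum>i\<in>I. diam_pow s (V i))"
      using sum.reindex_bij_betw[OF h, of "\<lambda>i. diam_pow s (V i)"] by simp
    finally show ?thesis using I(4) by (simp add: ennreal_leI)
  qed
  ultimately show "\<exists>U::nat \<Rightarrow> 'a set. A \<subseteq> (\<Union>i. U i) \<and>
      (\<forall>i. bounded (U i) \<and> diameter (U i) \<le> \<delta>) \<and> (\<Sum>i. ennreal (diam_pow s (U i))) \<le> ennreal e"
    by blast
qed

lemma hnull_countable_Union:
  fixes \<A> :: "'a::metric_space set set"
  assumes "countable \<A>" "\<And>A. A \<in> \<A> \<Longrightarrow> hnull s A"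
  shows "hnull s (\<Union>\<A>)"
proof (cases "\<A> = {}")
  case True then show ?thesis unfolding hnull_def
    by (intro allI impI exI[of _ "\<lambda>_. {}"]) (auto simp: diam_pow_def)
next
  case False
  define g where "g = from_nat_into \<A>"
  have gA: "g m \<in> \<A>" for m using False unfolding g_def by (simp add: from_nat_into)
  have Ug: "\<Union>\<A> = (\<Union>m. g m)" using range_from_nat_into[OF False assms(1)] unfolding g_def by simp
  show ?thesis unfolding hnull_def
  proof (intro allI impI)
    fix \<delta> e :: real assume "\<delta> > 0" "e > 0"
    have "\<forall>m. \<exists>U::nat \<Rightarrow> 'a set. g m \<subseteq> (\<Union>i. U i) \<and>
      (\<forall>i. bounded (U i) \<and> diameter (U i) \<le> \<delta>) \<and> (\<Sum>i. ennreal (diam_pow s (U i))) \<le> ennreal (e * (1/2)^Suc m)"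
      using assms(2)[OF gA] \<open>\<delta> > 0\<close> \<open>e > 0\<close> unfolding hnull_def by simp
    then obtain U where U: "\<And>m. g m \<subseteq> (\<Union>i. U m i)" "\<And>m i. bounded (U m i) \<and> diameter (U m i) \<le> \<delta>"
      "\<And>m. (\<Sum>i. ennreal (diam_pow s (U m i))) \<le> ennreal (e * (1/2)^Suc m)"
      by metis
    define W where "W i = (case prod_decode i of (m, j) \<Rightarrow> U m j)" for i
    have "(\<Union>\<A>) \<subseteq> (\<Union>i. W i)"
    proof
      fix x assume "x \<in> \<Union>\<A>"
      then obtain m where "x \<in> g m" using Ug by auto
      then obtain j where "x \<in> U m j" using U(1) by blast
      then have "x \<in> W (prod_encode (m, j))" unfolding W_def by simp
      then show "x \<in> (\<Union>i. W i)" by blast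
    qed
    moreover have "\<forall>i. bounded (W i) \<and> diameter (W i) \<le> \<delta>"
      using U(2) unfolding W_def by (auto split: prod.splits)
    moreover have "(\<Sum>i. ennreal (diam_pow s (W i))) \<le> ennreal e"
    proof -
      have "(\<Sum>i. ennreal (diam_pow s (W i))) = (\<Sum>i. (\<lambda>(m,j). ennreal (diam_pow s (U m j))) (prod_decode i))"
        unfolding W_def by (simp add: case_prod_beta)
      also have "\<dots> = (\<Sum>m. (\<Sum>j. ennreal (diam_pow s (U m j))))"
        by (rule suminf_ennreal_2dimen) simp
      also have "\<dots> \<le> (\<Sum>m. ennreal (e * (1/2)^Suc m))"
        by (intro suminf_le U(3)) auto
      also have "\<dots> = ennreal (\<Sum>m. e * (1/2)^Suc m)"
        using \<open>e > 0\<close> by (intro suminf_ennreal2) (auto intro!: summable_mult summable_geometric)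
      also have "(\<Sum>m. e * (1/2)^Suc m) = e"
      proof -
        have "(\<lambda>m. (1/2::real)^Suc m) sums 1"
          using sums_mult[OF geometric_sums[of "1/2::real"], of "1/2"] by (simp add: power_Suc)
        then have "(\<lambda>m. e * (1/2::real)^Suc m) sums (e * 1)" by (rule sums_mult)
        then show ?thesis by (simp add: sums_iff)
      qed
      finally show ?thesis by simp
    qed
    ultimately show "\<exists>U::nat \<Rightarrow> 'a set. \<Union>\<A> \<subseteq> (\<Union>i. U i) \<and>
      (\<forall>i. bounded (U i) \<and> diameter (U i) \<le> \<delta>) \<and> (\<Sum>i. ennreal (diam_pow s (U i))) \<le> ennreal e"
      by blast
  qed
qed

lemma Eit_0 [simp]: "Eit 0 k = k" by (simp add: Eit_def)
lemma Eit_Suc: "Eit (Suc n) k = exp (Eit n k) + k" by (simp add: Eit_def Eexp_def)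

fun Dd :: "nat \<Rightarrow> complex \<Rightarrow> complex" where
  "Dd 0 k = 1"
| "Dd (Suc n) k = exp (Eit n k) * Dd n k + 1"

lemma Eit_cont: "continuous_on UNIV (Eit n)"
proof (induction n)
  case 0 then show ?case by (simp add: Eit_def)
next
  case (Suc n)
  have "Eit (Suc n) = (\<lambda>k. exp (Eit n k) + k)" by (simp add: fun_eq_iff Eit_Suc)
  then show ?case using Suc by (auto intro!: continuous_intros)
qed

lemma Eit_deriv: "(Eit n has_field_derivative Dd n k) (at k)"
proof (induction n arbitrary: k)
  case 0 then show ?case by (simp add: Eit_def)
next
  case (Suc n)
  have "Eit (Suc n) = (\<lambda>k. exp (Eit n k) + k)" by (simp add: fun_eq_iff Eit_Suc)
  moreover have "((\<lambda>k. exp (Eit n k) + k) has_field_derivative exp (Eit n k) * Dd n k + 1) (at k)"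
    using Suc by (auto intro!: derivative_eq_intros)
  ultimately show ?case by simp
qed

lemma Dd_cont: "continuous_on UNIV (Dd n)"
proof (induction n)
  case 0 then show ?case by simp
next
  case (Suc n)
  have "Dd (Suc n) = (\<lambda>k. exp (Eit n k) * Dd n k + 1)" by (simp add: fun_eq_iff)
  then show ?case using Suc Eit_cont[of n] by (auto intro!: continuous_intros)
qed

lemma deriv_Eit: "deriv (Eit n) k = Dd n k"
  using Eit_deriv by (rule DERIV_imp_deriv)

lemma base_ball:
  assumes "norm (Dd N k0) \<ge> 2"
  shows "\<exists>r>0. \<forall>k\<in>ball k0 r. \<forall>k'\<in>ball k0 r.
           norm (k - k') \<le> norm (Eit N k - Eit N k') \<and> norm (Eit N k - Eit N k') \<le> 5"
proof -
  have "isCont (Dd N) k0" using Dd_cont[of N] by (simp add: continuous_on_eq_continuous_at)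
  then have "\<exists>d>0. \<forall>y. dist y k0 < d \<longrightarrow> dist (Dd N y) (Dd N k0) < 1"
    unfolding continuous_at_eps_delta by (erule_tac x=1 in allE) simp
  then obtain r1 where r1: "r1 > 0" "\<And>k. dist k k0 < r1 \<Longrightarrow> dist (Dd N k) (Dd N k0) < 1"
    by auto
  have "isCont (Eit N) k0" using Eit_cont[of N] by (simp add: continuous_on_eq_continuous_at)
  then have "\<exists>d>0. \<forall>y. dist y k0 < d \<longrightarrow> dist (Eit N y) (Eit N k0) < 2"
    unfolding continuous_at_eps_delta by (erule_tac x=2 in allE) simp
  then obtain r2 where r2: "r2 > 0" "\<And>k. dist k k0 < r2 \<Longrightarrow> dist (Eit N k) (Eit N k0) < 2"
    by auto
  define r where "r = min r1 r2"
  have "r > 0" using r1 r2 by (simp add: r_def)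
  moreover have "norm (k - k') \<le> norm (Eit N k - Eit N k') \<and> norm (Eit N k - Eit N k') \<le> 5"
    if k: "k \<in> ball k0 r" and k': "k' \<in> ball k0 r" for k k'
  proof
    let ?g = "\<lambda>z. Eit N z - Dd N k0 * z"
    have "norm (?g k - ?g k') \<le> 1 * norm (k - k')"
    proof (rule field_differentiable_bound[OF convex_ball])
      fix z assume z: "z \<in> ball k0 r"
      show "(?g has_field_derivative (Dd N z - Dd N k0)) (at z within ball k0 r)"
        using has_field_derivative_at_within[OF DERIV_diff[OF Eit_deriv[of N z] DERIV_cmult[OF DERIV_ident, of "Dd N k0"]]]
        by simp
      have "dist z k0 < r1" using z r_def by (simp add: dist_commute)
      then show "norm (Dd N z - Dd N k0) \<le> 1" using r1(2)[of z] by (simp add: dist_norm)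
    qed (use k k' in auto)
    moreover have "norm (Dd N k0 * (k - k')) \<ge> 2 * norm (k - k')"
      using assms unfolding norm_mult by (intro mult_right_mono) auto
    moreover have "norm (Dd N k0 * (k - k')) - norm (?g k - ?g k') \<le> norm (Dd N k0 * (k - k') + (?g k - ?g k'))"
      by (rule norm_diff_ineq)
    ultimately have "norm (k - k') \<le> norm (Dd N k0 * (k - k') + (?g k - ?g k'))"
      by linarith
    moreover have "Dd N k0 * (k - k') + (?g k - ?g k') = Eit N k - Eit N k'"
      by (simp add: algebra_simps)
    ultimately show "norm (k - k') \<le> norm (Eit N k - Eit N k')"
      by metis
    have "dist k k0 < r2" "dist k' k0 < r2" using k k' r_def by (auto simp: dist_commute)
    then have "dist (Eit N k) (Eit N k0) < 2" "dist (Eit N k') (Eit N k0) < 2" using r2 by auto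
    moreover have "dist (Eit N k) (Eit N k') \<le> dist (Eit N k) (Eit N k0) + dist (Eit N k') (Eit N k0)"
      using dist_triangle2[of "Eit N k" "Eit N k'" "Eit N k0"] by (simp add: dist_commute)
    ultimately show "norm (Eit N k - Eit N k') \<le> 5"
      by (simp add: dist_norm)
  qed
  ultimately show ?thesis by blast
qed

lemma strip_lemma:
  fixes w k :: complex and p K R0 :: real
  assumes p: "p > 1" and k: "norm k \<le> K" and R: "K < R0" "K \<le> exp (R0/p)" "R0 \<le> Re w"
    and w': "R0 \<le> Re (exp w + k)" "\<bar>Im (exp w + k)\<bar> < Re (exp w + k) powr (1/p)"
  shows "0 < cos (Im w)" "\<bar>sin (Im w)\<bar> \<le> 3 * exp (- (Re w * (1 - 1/p)))"
proof -
  define x where "x = Re w"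
  define y where "y = Im w"
  have re: "Re (exp w + k) = exp x * cos y + Re k" by (simp add: Re_exp x_def y_def)
  have im: "Im (exp w + k) = exp x * sin y + Im k" by (simp add: Im_exp x_def y_def)
  have rk: "\<bar>Re k\<bar> \<le> K" "\<bar>Im k\<bar> \<le> K" using abs_Re_le_cmod[of k] abs_Im_le_cmod[of k] k by linarith+
  have K0: "0 \<le> K" using k norm_ge_zero order.trans by blast
  have "exp x * cos y > 0" using re w'(1) rk R(1) by linarith
  then show "0 < cos (Im w)" using y_def by (simp add: zero_less_mult_iff)
  have R0pos: "R0 > 0" using K0 R by linarith
  have "R0 / p \<le> R0" using R0pos p by (simp add: divide_le_eq)
  then have "R0/p \<le> x / p" "R0 / p \<le> x" using R(3) p x_def by (auto simp: divide_right_mono)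
  then have Kx: "K \<le> exp (x/p)" "K \<le> exp x" using R(2) by (meson exp_le_cancel_iff order.trans)+
  have cosle: "cos y \<le> 1" by simp
  have "Re (exp w + k) \<le> exp x + K" using re rk cosle
    by (smt (verit, ccfv_SIG) exp_gt_zero mult_left_le)
  also have "\<dots> \<le> 2 * exp x" using Kx by simp
  finally have "Re (exp w + k) \<le> 2 * exp x" .
  then have "Re (exp w + k) powr (1/p) \<le> (2 * exp x) powr (1/p)"
    using w'(1) R0pos p by (intro powr_mono2) auto
  also have "\<dots> = 2 powr (1/p) * exp (x/p)"
    by (simp add: powr_mult exp_powr_real)
  also have "2 powr (1/p) \<le> (2::real) powr 1"
    using p by (intro powr_mono) auto
  then have "2 powr (1/p) * exp (x/p) \<le> 2 * exp (x/p)" by simp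
  finally have a: "\<bar>Im (exp w + k)\<bar> < 2 * exp (x/p)" using w'(2) by linarith
  have "exp x * \<bar>sin y\<bar> = \<bar>Im (exp w + k) - Im k\<bar>" using im by (simp add: abs_mult)
  also have "\<dots> \<le> \<bar>Im (exp w + k)\<bar> + K" using rk by linarith
  also have "\<dots> \<le> 3 * exp (x/p)" using a Kx by linarith
  finally have "\<bar>sin y\<bar> \<le> 3 * exp (x/p) / exp x" by (simp add: field_simps)
  also have "3 * exp (x/p) / exp x = 3 * exp (- (x * (1 - 1/p)))"
  proof -
    have "- (x * (1 - 1/p)) = x/p - x" by (simp add: algebra_simps)
    then show ?thesis by (simp add: exp_diff)
  qed
  finally show "\<bar>sin (Im w)\<bar> \<le> 3 * exp (- (Re w * (1 - 1/p)))" by (simp add: x_def y_def)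
qed

lemma mass_bound:
  fixes p s R0 X lam :: real
  assumes p: "p > 1" and s: "s > 1 + 1/p" and X: "X \<ge> R0" "R0 \<ge> 5" and lam: "lam \<ge> 1"
    and R5: "2592 * 4 powr s * exp 20 \<le> exp ((R0-5)*(s-1-1/p))"
  shows "(10 / exp (-(X+5)) + 2) * 4 * (8 * (3 * exp (-((X-5)*(1-1/p)))) / exp (-(X+5)) + 1)
           * (lam * exp (X-5) / 4) powr (-s) \<le> lam powr (-s) / 2"
proof -
  define h where "h = exp (-(X+5))"
  define eps where "eps = 3 * exp (-((X-5)*(1-1/p)))"
  define c where "c = s - 1 - 1/p"
  have c: "c > 0" using s c_def by simp
  have hpos: "h > 0" by (simp add: h_def)
  have h1: "h \<le> 1" unfolding h_def using X by simp
  have a1: "10/h + 2 \<le> 12/h" using hpos h1 by (simp add: field_simps)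
  have "X + 5 - (X-5)*(1-1/p) = (X-5)/p + 10" by (simp add: algebra_simps diff_divide_distrib)
  moreover have "(X-5)/p \<ge> 0" using X p by simp
  ultimately have "0 \<le> X + 5 - (X-5)*(1-1/p)" by linarith
  then have "1 \<le> exp (X + 5 - (X-5)*(1-1/p))" by simp
  also have "exp (X + 5 - (X-5)*(1-1/p)) = exp (-((X-5)*(1-1/p))) / h"
    by (simp add: h_def exp_diff[symmetric] exp_minus field_simps)
  finally have "1 \<le> exp (-((X-5)*(1-1/p))) / h" .
  then have eh: "1 \<le> eps / h" unfolding eps_def by simp
  have a2: "8 * eps / h + 1 \<le> 9 * eps / h" using eh by simp
  have mu: "(lam * exp (X-5) / 4) powr (-s) = lam powr (-s) * exp (- ((X - 5) * s)) * 4 powr s"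
  proof -
    have "(lam * exp (X-5) / 4) powr (-s) = (lam * exp (X-5)) powr (-s) / 4 powr (-s)"
      by (rule powr_divide)
    also have "(lam * exp (X-5)) powr (-s) = lam powr (-s) * exp (X-5) powr (-s)"
      by (rule powr_mult)
    also have "exp (X-5) powr (-s) = exp (- ((X - 5) * s))" by (simp add: exp_powr_real)
    also have "(4::real) powr (-s) = inverse (4 powr s)" by (rule powr_minus)
    finally show ?thesis by (simp only: divide_inverse inverse_inverse_eq)
  qed
  have lpos: "lam powr (-s) > 0" using lam by simp
  have "(10/h + 2) * 4 * (8 * eps / h + 1) \<le> (12/h) * 4 * (9 * eps / h)"
  proof -
    have "(10/h+2)*4 \<le> (12/h)*4" using a1 by simp
    moreover have "0 \<le> eps" unfolding eps_def by simp
    ultimately show ?thesis using a2 hpos by (intro mult_mono) auto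
  qed
  also have "\<dots> = 432 * eps * (1/h) * (1/h)" by simp
  also have "1/h = exp (X+5)" by (simp only: h_def exp_minus[of "X+5"] divide_inverse mult_1 inverse_inverse_eq)
  also have "432 * eps * exp (X+5) * exp (X+5) = 1296 * exp (-((X-5)*(1-1/p))) * (exp (X+5) * exp (X+5))"
    unfolding eps_def by simp
  also have "exp (X+5) * exp (X+5) = exp (2*X+10)" by (simp add: exp_add[symmetric])
  finally have cardb: "(10/h + 2) * 4 * (8 * eps / h + 1) \<le> 1296 * exp (-((X-5)*(1-1/p))) * exp (2*X+10)" .
  have "(10/h + 2) * 4 * (8 * eps / h + 1) * (lam * exp (X-5) / 4) powr (-s)
     \<le> 1296 * exp (-((X-5)*(1-1/p))) * exp (2*X+10) * (lam powr (-s) * exp (- ((X - 5) * s)) * 4 powr s)"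
    unfolding mu by (rule mult_right_mono[OF cardb]) simp
  also have "\<dots> = lam powr (-s) * (1296 * 4 powr s * exp (20 - (X-5)*c))"
  proof -
    have e: "-((X-5)*(1-1/p)) + (2*X+10) + (- ((X - 5) * s)) = 20 - (X-5)*c"
      by (simp add: c_def algebra_simps)
    have "exp (-((X-5)*(1-1/p))) * exp (2*X+10) * exp (- ((X - 5) * s)) = exp (20 - (X-5)*c)"
      by (simp only: exp_add[symmetric] e)
    then show ?thesis by (simp only: mult_ac)
  qed
  also have "1296 * 4 powr s * exp (20 - (X-5)*c) \<le> 1/2"
  proof -
    have "(R0-5)*c \<le> (X-5)*c" using X c by (intro mult_right_mono) auto
    then have "exp ((R0-5)*c) \<le> exp ((X-5)*c)" by simp
    then have "2592 * 4 powr s * exp 20 \<le> exp ((X-5)*c)" using R5 unfolding c_def by linarith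
    then have "2 * (1296 * 4 powr s * exp 20) \<le> exp ((X-5)*c)" by simp
    then have "1296 * 4 powr s * exp 20 / exp ((X-5)*c) \<le> 1/2"
      by (simp add: divide_simps)
    moreover have "exp (20 - (X-5)*c) = exp 20 / exp ((X-5)*c)" by (simp add: exp_diff)
    ultimately show ?thesis by (simp add: mult.assoc)
  qed
  then have "lam powr (-s) * (1296 * 4 powr s * exp (20 - (X-5)*c)) \<le> lam powr (-s) * (1/2)"
    using lpos by (intro mult_left_mono) auto
  finally show ?thesis unfolding h_def eps_def by simp
qed

lemma child_pair_gen:
  fixes w w' k k' :: complex and lam X h :: real
  assumes d: "norm (w - w') < 2*h" and h: "h = exp (-(X+5))" "h \<le> 1/4"
    and l: "lam * norm (k - k') \<le> norm (w - w')" "lam \<ge> 1"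
    and e: "X - 5 \<le> Re w'" "Re w' \<le> X + 5" "8 \<le> exp (X-5)"
  shows "lam * exp (X-5) / 4 * norm (k - k') \<le> norm ((exp w + k) - (exp w' + k'))"
    "norm ((exp w + k) - (exp w' + k')) \<le> 5"
proof -
  define D where "D = w - w'"
  have hpos: "h > 0" using h by simp
  have Dn: "norm D \<le> 1/2" using d h unfolding D_def by linarith
  have eq: "(exp w + k) - (exp w' + k') = exp w' * (exp D - 1) + (k - k')"
  proof -
    have "exp w = exp w' * exp D" unfolding D_def by (simp add: exp_add[symmetric])
    then show ?thesis by (simp add: algebra_simps)
  qed
  have E1: "exp (X-5) \<le> norm (exp w')" using e by simp
  have E2: "norm (exp w') \<le> exp (X+5)" using e by simp
  have b1: "norm (exp D - 1) \<ge> 1/2 * norm D" "norm (exp D - 1) \<le> 3/2 * norm D"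
    using norm_exp_bounds'[OF Dn] by auto
  have kk: "norm (k - k') \<le> norm D" 
  proof -
    have "1 * norm (k - k') \<le> lam * norm (k - k')" using l(2) by (intro mult_right_mono) auto
    then show ?thesis using l(1) unfolding D_def by simp
  qed
  have "exp (X-5) * (1/2 * norm D) \<le> norm (exp w') * norm (exp D - 1)"
    using E1 b1(1) by (intro mult_mono) auto
  then have low1: "exp (X-5) / 2 * norm D \<le> norm (exp w' * (exp D - 1))" by (simp add: norm_mult)
  have "exp (X-5) / 2 * (lam * norm (k - k')) \<le> exp (X-5) / 2 * norm D"
    using l(1) unfolding D_def by (intro mult_left_mono) auto
  moreover have "norm (exp w' * (exp D - 1)) - norm (k - k') \<le> norm (exp w' * (exp D - 1) + (k - k'))"
    by (rule norm_diff_ineq)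
  moreover have "lam * exp (X-5) / 4 * norm (k - k') + norm (k - k') \<le> exp (X-5) / 2 * (lam * norm (k - k'))"
  proof -
    have "8 * 1 \<le> exp (X-5) * lam" using l(2) e(3) by (intro mult_mono) auto
    then have "1 \<le> lam * exp (X-5) / 4" by (simp add: mult.commute)
    then have "1 * norm (k - k') \<le> lam * exp (X-5) / 4 * norm (k - k')" by (intro mult_right_mono) auto
    then show ?thesis by (simp add: algebra_simps)
  qed
  ultimately show "lam * exp (X-5) / 4 * norm (k - k') \<le> norm ((exp w + k) - (exp w' + k'))"
    unfolding eq using low1 by linarith
  have "norm (exp w' * (exp D - 1)) \<le> exp (X+5) * (3/2 * norm D)"
    unfolding norm_mult using E2 b1(2) by (intro mult_mono) auto
  also have "\<dots> \<le> exp (X+5) * (3/2 * (2*h))"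
    using d unfolding D_def by (intro mult_left_mono) auto
  also have "exp (X+5) * (3/2 * (2*h)) = 3"
  proof -
    have eh1: "exp (X+5) * h = 1" unfolding h(1) by (simp add: exp_add[symmetric])
    have "exp (X+5) * (3/2 * (2*h)) = 3 * (exp (X+5) * h)" by (simp add: algebra_simps)
    then show ?thesis using eh1 by simp
  qed
  finally have "norm (exp w' * (exp D - 1)) \<le> 3" .
  moreover have "norm (exp w' * (exp D - 1) + (k - k')) \<le> norm (exp w' * (exp D - 1)) + norm (k - k')"
    by (rule norm_triangle_ineq)
  ultimately show "norm ((exp w + k) - (exp w' + k')) \<le> 5"
    unfolding eq using kk Dn by linarith
qed

lemma floor_eq_close:
  fixes a b :: real assumes "floor a = floor b" shows "\<bar>a - b\<bar> < 1"
proof -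
  define m where "m = real_of_int (floor a)"
  have "m \<le> a" "a < m+1" using floor_correct[of a] by (auto simp: m_def)
  moreover have "m \<le> b" "b < m+1" using floor_correct[of b] assms by (auto simp: m_def)
  ultimately show ?thesis by (simp add: abs_less_iff)
qed

lemma floor_div_close:
  fixes a b h :: real assumes "floor (a/h) = floor (b/h)" "h > 0" shows "\<bar>a - b\<bar> < h"
proof -
  have "\<bar>a/h - b/h\<bar> < 1" using floor_eq_close[OF assms(1)] .
  then have "\<bar>(a - b)/h\<bar> < 1" by (simp add: diff_divide_distrib)
  then show ?thesis using assms(2) by (simp add: abs_divide divide_less_eq)
qed

lemma tt_props:
  fixes y :: real
  defines "t \<equiv> y - 2 * pi * of_int (floor (y/(2*pi) + 1/2))"
  shows "-pi \<le> t" "t < pi" "sin t = sin y" "cos t = cos y"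
proof -
  define m where "m = floor (y/(2*pi) + 1/2)"
  have "of_int m \<le> y/(2*pi) + 1/2 \<and> y/(2*pi) + 1/2 < of_int (m + 1)" unfolding m_def by (rule floor_correct)
  then have "of_int m \<le> y/(2*pi) + 1/2" "y/(2*pi) + 1/2 < of_int m + 1" by auto
  then have "2 * pi * of_int m \<le> y + pi" "y + pi < 2 * pi * of_int m + 2*pi"
    by (simp_all add: field_simps)
  then show "-pi \<le> t" "t < pi" unfolding t_def m_def[symmetric] by linarith+
  show "sin t = sin y" unfolding t_def by (simp add: sin_diff)
  show "cos t = cos y" unfolding t_def by (simp add: cos_diff)
qed

lemma real_nat_le: "of_int z \<le> (b::real) \<Longrightarrow> 0 \<le> b \<Longrightarrow> real (nat z) \<le> b"
  by (cases "z \<ge> 0") auto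

locale dyn =
  fixes p s K R0 :: real and S :: "complex set" and N :: nat
  assumes p: "p > 1" and s: "s > 1 + 1/p"
    and SK: "\<And>k. k \<in> S \<Longrightarrow> norm k \<le> K"
    and R1: "K < R0" and R2: "K \<le> exp (R0/p)" and R3: "8 \<le> exp (R0 - 5)" and R0_5: "R0 \<ge> 5"
    and R4: "3 * exp (-((R0-5)*(1-1/p))) \<le> 1/4"
    and R5: "2592 * 4 powr s * exp 20 \<le> exp ((R0-5)*(s-1-1/p))"
begin

definition A where "A = {k\<in>S. \<forall>n\<ge>N. Eit n k \<in> P_region p \<and> R0 \<le> Re (Eit n k)}"

definition good where "good n P lam \<longleftrightarrow> P \<subseteq> A \<and> N \<le> n \<and> 1 \<le> lam \<and>
   (\<forall>k\<in>P. \<forall>k'\<in>P. lam * norm (k - k') \<le> norm (Eit n k - Eit n k') \<and> norm (Eit n k - Eit n k') \<le> 5)"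

lemma A_props:
  assumes "k \<in> A" "N \<le> n"
  shows "norm k \<le> K" "R0 \<le> Re (Eit n k)" "R0 \<le> Re (Eit (Suc n) k)"
    "\<bar>Im (Eit (Suc n) k)\<bar> < Re (Eit (Suc n) k) powr (1/p)"
  using assms SK unfolding A_def P_region_def by auto

lemma strip_t:
  assumes "k \<in> A" "N \<le> n" "X - 5 \<le> Re (Eit n k)"
  defines "y \<equiv> Im (Eit n k)"
  shows "\<bar>y - 2 * pi * of_int (floor (y/(2*pi) + 1/2))\<bar> \<le> 4 * (3 * exp (-((X-5)*(1-1/p))))"
proof -
  note a = A_props[OF assms(1,2)]
  have ES: "Eit (Suc n) k = exp (Eit n k) + k" by (rule Eit_Suc)
  have st: "0 < cos y" "\<bar>sin y\<bar> \<le> 3 * exp (- (Re (Eit n k) * (1 - 1/p)))"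
    using strip_lemma[OF p a(1) R1 R2 a(2)] a(3,4) unfolding ES y_def by auto
  have "(X-5)*(1-1/p) \<le> Re (Eit n k) * (1-1/p)"
    using assms(3) p by (intro mult_right_mono) auto
  then have "3 * exp (- (Re (Eit n k) * (1 - 1/p))) \<le> 3 * exp (-((X-5)*(1-1/p)))" by simp
  then have sy: "\<bar>sin y\<bar> \<le> 3 * exp (-((X-5)*(1-1/p)))" using st(2) by linarith
  define t where "t = y - 2 * pi * of_int (floor (y/(2*pi) + 1/2))"
  note tp = tt_props[of y, folded t_def]
  have "\<bar>t\<bar> \<le> 4 * \<bar>sin t\<bar>" using tp st(1) by (intro strip_bound) auto
  then show ?thesis using tp sy unfolding t_def[symmetric] by linarith
qed


lemma step:
  assumes g: "good n P lam"
  shows "\<exists>F. finite F \<and> P \<subseteq> (\<Union>x\<in>F. fst x) \<and> (\<forall>x\<in>F. good (Suc n) (fst x) (snd x) \<and> 2 * lam \<le> snd x)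
           \<and> (\<Sum>x\<in>F. snd x powr (-s)) \<le> lam powr (-s) / 2"
proof (cases "P = {}")
  case True
  then show ?thesis by (intro exI[of _ "{}"]) simp
next
  case False
  then obtain k0 where k0: "k0 \<in> P" by blast
  from g have PA: "P \<subseteq> A" and nN: "N \<le> n" and lam1: "1 \<le> lam"
    and pr: "\<And>k k'. k \<in> P \<Longrightarrow> k' \<in> P \<Longrightarrow>
       lam * norm (k - k') \<le> norm (Eit n k - Eit n k') \<and> norm (Eit n k - Eit n k') \<le> 5"
    unfolding good_def by auto
  define X where "X = Re (Eit n k0)"
  define Y where "Y = Im (Eit n k0)"
  have XR: "R0 \<le> X" using A_props(2)[OF _ nN] k0 PA unfolding X_def by auto
  define h where "h = exp (-(X+5))"
  define eps where "eps = 3 * exp (-((X-5)*(1-1/p)))"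
  define eta where "eta = 4 * eps"
  define mu where "mu = lam * exp (X-5) / 4"
  define kk where "kk k = floor (Im (Eit n k)/(2*pi) + 1/2)" for k
  define tt where "tt k = Im (Eit n k) - 2 * pi * of_int (kk k)" for k
  define phi where "phi k = (floor (Re (Eit n k)/h), kk k, floor ((tt k + eta)/h))" for k
  define J where "J = {floor ((X-5)/h)..floor ((X+5)/h)} \<times> {ceiling ((Y-6)/(2*pi))..floor ((Y+6)/(2*pi))}
                       \<times> {0..floor (2*eta/h)}"
  define F where "F = (\<lambda>i. ({k\<in>P. phi k = i}, mu)) ` J"
  have hpos: "h > 0" unfolding h_def by simp
  have E8: "8 \<le> exp (X-5)" using R3 XR by (meson exp_le_cancel_iff diff_right_mono order.trans)
  have "exp (X-5) \<le> exp (X+5)" by simp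
  then have E8': "8 \<le> exp (X+5)" using E8 by linarith
  have h14: "h \<le> 1/4"
  proof -
    have "h * exp (X+5) = 1" unfolding h_def by (simp add: exp_add[symmetric])
    moreover have "h * 8 \<le> h * exp (X+5)" using E8' hpos by (intro mult_left_mono) auto
    ultimately show ?thesis by linarith
  qed
  have eps_le: "eps \<le> 1/4"
  proof -
    have "(R0-5)*(1-1/p) \<le> (X-5)*(1-1/p)" using XR p by (intro mult_right_mono) auto
    then have "exp (-((X-5)*(1-1/p))) \<le> exp (-((R0-5)*(1-1/p)))" by simp
    then show ?thesis using R4 unfolding eps_def by linarith
  qed
  have eps0: "0 \<le> eps" unfolding eps_def by simp
  have eta1: "eta \<le> 1" "0 \<le> eta" using eps_le eps0 unfolding eta_def by auto
  have close: "\<bar>Re (Eit n k) - X\<bar> \<le> 5" "\<bar>Im (Eit n k) - Y\<bar> \<le> 5" if "k \<in> P" for k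
  proof -
    have "norm (Eit n k - Eit n k0) \<le> 5" using pr[OF that k0] by simp
    then show "\<bar>Re (Eit n k) - X\<bar> \<le> 5" "\<bar>Im (Eit n k) - Y\<bar> \<le> 5"
      unfolding X_def Y_def using abs_Re_le_cmod[of "Eit n k - Eit n k0"] abs_Im_le_cmod[of "Eit n k - Eit n k0"]
      by auto
  qed
  have ttb: "\<bar>tt k\<bar> \<le> eta" if "k \<in> P" for k
  proof -
    have "X - 5 \<le> Re (Eit n k)" using close(1)[OF that] by linarith
    from strip_t[OF _ nN this] that PA show ?thesis unfolding tt_def kk_def eta_def eps_def by auto
  qed
  have mem: "phi k \<in> J" if kP: "k \<in> P" for k
  proof -
    have c1: "X - 5 \<le> Re (Eit n k)" "Re (Eit n k) \<le> X + 5" using close(1)[OF kP] by linarith+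
    have a: "floor ((X-5)/h) \<le> floor (Re (Eit n k)/h)" "floor (Re (Eit n k)/h) \<le> floor ((X+5)/h)"
      using c1 hpos by (auto intro!: floor_mono divide_right_mono)
    have im: "Im (Eit n k) = tt k + 2 * pi * of_int (kk k)" unfolding tt_def by simp
    have "Y - 6 \<le> 2 * pi * of_int (kk k)" "2 * pi * of_int (kk k) \<le> Y + 6"
      using close(2)[OF kP] ttb[OF kP] eta1 im by linarith+
    then have "(Y-6)/(2*pi) \<le> of_int (kk k)" "of_int (kk k) \<le> (Y+6)/(2*pi)"
      by (simp_all add: divide_simps mult.commute)
    then have b: "ceiling ((Y-6)/(2*pi)) \<le> kk k" "kk k \<le> floor ((Y+6)/(2*pi))"
      by (simp_all add: ceiling_le_iff le_floor_iff)
    have "0 \<le> tt k + eta" "tt k + eta \<le> 2*eta" using ttb[OF kP] by linarith+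
    then have "0 \<le> (tt k + eta)/h" "(tt k + eta)/h \<le> 2*eta/h" using hpos by (auto intro: divide_right_mono)
    then have c: "0 \<le> floor ((tt k + eta)/h)" "floor ((tt k + eta)/h) \<le> floor (2*eta/h)"
      by (auto intro: floor_mono)
    show ?thesis unfolding J_def phi_def using a b c by auto
  qed
  have fin: "finite F" unfolding F_def J_def by simp
  have cov: "P \<subseteq> (\<Union>x\<in>F. fst x)"
  proof
    fix k assume kP: "k \<in> P"
    then have "({k'\<in>P. phi k' = phi k}, mu) \<in> F" using mem[OF kP] unfolding F_def by blast
    then show "k \<in> (\<Union>x\<in>F. fst x)" using kP by force
  qed
  have mu2: "2 * lam \<le> mu"
  proof -
    have "lam * 8 \<le> lam * exp (X-5)" using E8 lam1 by (intro mult_left_mono) auto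
    then show ?thesis unfolding mu_def by simp
  qed
  have pair: "mu * norm (k - k') \<le> norm (Eit (Suc n) k - Eit (Suc n) k') \<and> norm (Eit (Suc n) k - Eit (Suc n) k') \<le> 5"
    if kP: "k \<in> P" and kP': "k' \<in> P" and eq: "phi k = phi k'" for k k'
  proof -
    have e1: "floor (Re (Eit n k)/h) = floor (Re (Eit n k')/h)" "kk k = kk k'"
      "floor ((tt k + eta)/h) = floor ((tt k' + eta)/h)" using eq unfolding phi_def by auto
    have r: "\<bar>Re (Eit n k) - Re (Eit n k')\<bar> < h" using floor_div_close[OF e1(1) hpos] .
    have "\<bar>(tt k + eta) - (tt k' + eta)\<bar> < h" using floor_div_close[OF e1(3) hpos] .
    moreover have "Im (Eit n k) - Im (Eit n k') = tt k - tt k'" unfolding tt_def using e1(2) by simp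
    ultimately have i: "\<bar>Im (Eit n k) - Im (Eit n k')\<bar> < h" by simp
    have "norm (Eit n k - Eit n k') \<le> \<bar>Re (Eit n k - Eit n k')\<bar> + \<bar>Im (Eit n k - Eit n k')\<bar>" by (rule cmod_le)
    then have d: "norm (Eit n k - Eit n k') < 2*h" using r i by simp
    have c1: "X - 5 \<le> Re (Eit n k')" "Re (Eit n k') \<le> X + 5" using close(1)[OF kP'] by linarith+
    note cp = child_pair_gen[OF d h_def h14 _ lam1 c1 E8, of k k']
    show ?thesis using cp pr[OF kP kP'] unfolding Eit_Suc mu_def by auto
  qed
  have goodc: "good (Suc n) (fst x) (snd x) \<and> 2 * lam \<le> snd x" if xF: "x \<in> F" for x
  proof -
    obtain i where i: "x = ({k\<in>P. phi k = i}, mu)" using xF unfolding F_def by blast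
    show ?thesis unfolding i good_def using PA nN lam1 mu2 pair by auto
  qed
  have "(\<Sum>x\<in>F. snd x powr (-s)) \<le> (\<Sum>i\<in>J. mu powr (-s))"
    unfolding F_def using sum_image_le[of J "\<lambda>x. snd x powr (-s)" "\<lambda>i. ({k\<in>P. phi k = i}, mu)"]
    by (simp add: J_def o_def)
  also have "\<dots> = real (card J) * mu powr (-s)" by simp
  also have "real (card J) \<le> (10/h + 2) * 4 * (8*eps/h + 1)"
  proof -
    define a0 where "a0 = floor ((X-5)/h)"
    define a1 where "a1 = floor ((X+5)/h)"
    define b0 where "b0 = ceiling ((Y-6)/(2*pi))"
    define b1 where "b1 = floor ((Y+6)/(2*pi))"
    define c1 where "c1 = floor (2*eta/h)"
    have cJ: "card J = nat (a1 - a0 + 1) * (nat (b1 - b0 + 1) * nat (c1 + 1))"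
      unfolding J_def a0_def a1_def b0_def b1_def c1_def by (simp add: card_cartesian_product)
    have "of_int a1 \<le> (X+5)/h" unfolding a1_def by (rule of_int_floor_le)
    moreover have "(X-5)/h < of_int a0 + 1" unfolding a0_def using floor_correct[of "(X-5)/h"] by simp
    moreover have "(X+5)/h - (X-5)/h = 10/h" by (simp add: diff_divide_distrib[symmetric])
    ultimately have "of_int (a1 - a0 + 1) \<le> 10/h + 2" by simp
    then have A1: "real (nat (a1 - a0 + 1)) \<le> 10/h + 2" using hpos by (intro real_nat_le) auto
    have "of_int b1 \<le> (Y+6)/(2*pi)" unfolding b1_def by (rule of_int_floor_le)
    moreover have "(Y-6)/(2*pi) \<le> of_int b0" unfolding b0_def by (rule le_of_int_ceiling)
    moreover have "(Y+6)/(2*pi) - (Y-6)/(2*pi) = 6/pi" by (simp add: diff_divide_distrib[symmetric])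
    moreover have "6/pi \<le> 3" using pi_ge_two by (simp add: divide_simps)
    ultimately have "of_int (b1 - b0 + 1) \<le> (4::real)" by simp
    then have A2: "real (nat (b1 - b0 + 1)) \<le> 4" by (intro real_nat_le) auto
    have "of_int c1 \<le> 2*eta/h" unfolding c1_def by (rule of_int_floor_le)
    then have "of_int (c1 + 1) \<le> 8*eps/h + 1" unfolding eta_def by simp
    then have A3: "real (nat (c1 + 1)) \<le> 8*eps/h + 1" using hpos eps0 by (intro real_nat_le) auto
    have "real (card J) = real (nat (a1 - a0 + 1)) * (real (nat (b1 - b0 + 1)) * real (nat (c1 + 1)))"
      unfolding cJ by simp
    also have "\<dots> \<le> (10/h + 2) * (4 * (8*eps/h + 1))"
      using A1 A2 A3 by (intro mult_mono) auto
    finally show ?thesis by (simp only: mult.assoc)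
  qed
  then have "real (card J) * mu powr (-s) \<le> (10/h + 2) * 4 * (8*eps/h + 1) * mu powr (-s)"
    by (intro mult_right_mono) auto
  also have "\<dots> \<le> lam powr (-s) / 2"
    using mass_bound[OF p s XR R0_5 lam1 R5] unfolding h_def eps_def mu_def by simp
  finally have "(\<Sum>x\<in>F. snd x powr (-s)) \<le> lam powr (-s) / 2" .
  then show ?thesis using fin cov goodc by blast
qed

end

lemma sum_UN_le_nonneg:
  fixes f :: "'a \<Rightarrow> real"
  assumes "finite I" "\<And>i. i \<in> I \<Longrightarrow> finite (B i)" "\<And>x. 0 \<le> f x"
  shows "sum f (\<Union>i\<in>I. B i) \<le> (\<Sum>i\<in>I. sum f (B i))"
  using assms
proof (induction I rule: finite_induct)
  case empty then show ?case by simp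
next
  case (insert i I)
  have fU: "finite (\<Union>i\<in>I. B i)" using insert by auto
  have fB: "finite (B i)" using insert by auto
  have "sum f (B i \<union> (\<Union>i\<in>I. B i)) + sum f (B i \<inter> (\<Union>i\<in>I. B i)) = sum f (B i) + sum f (\<Union>i\<in>I. B i)"
    by (rule sum.union_inter[OF fB fU])
  moreover have "0 \<le> sum f (B i \<inter> (\<Union>i\<in>I. B i))" using insert(5) by (intro sum_nonneg) auto
  moreover have "sum f (\<Union>i\<in>I. B i) \<le> (\<Sum>i\<in>I. sum f (B i))" using insert by auto
  ultimately show ?case using insert(1,2) by simp
qed

context dyn
begin

lemma iterate:
  assumes g0: "good N P0 1"
  shows "\<exists>F. finite F \<and> P0 \<subseteq> (\<Union>x\<in>F. fst x) \<and> (\<forall>x\<in>F. good (N+m) (fst x) (snd x) \<and> 2^m \<le> snd x)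
           \<and> (\<Sum>x\<in>F. snd x powr (-s)) \<le> (1/2)^m"
proof (induction m)
  case 0
  show ?case using g0 by (intro exI[of _ "{(P0, 1)}"]) simp
next
  case (Suc m)
  then obtain F where F: "finite F" "P0 \<subseteq> (\<Union>x\<in>F. fst x)"
    "\<And>x. x \<in> F \<Longrightarrow> good (N+m) (fst x) (snd x) \<and> 2^m \<le> snd x"
    "(\<Sum>x\<in>F. snd x powr (-s)) \<le> (1/2)^m" by blast
  have "\<forall>x\<in>F. \<exists>G. finite G \<and> fst x \<subseteq> (\<Union>y\<in>G. fst y) \<and> (\<forall>y\<in>G. good (Suc (N+m)) (fst y) (snd y) \<and> 2 * snd x \<le> snd y)
           \<and> (\<Sum>y\<in>G. snd y powr (-s)) \<le> snd x powr (-s) / 2"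
    using F(3) step by blast
  then obtain G where G: "\<And>x. x \<in> F \<Longrightarrow> finite (G x) \<and> fst x \<subseteq> (\<Union>y\<in>G x. fst y) \<and>
      (\<forall>y\<in>G x. good (Suc (N+m)) (fst y) (snd y) \<and> 2 * snd x \<le> snd y)
           \<and> (\<Sum>y\<in>G x. snd y powr (-s)) \<le> snd x powr (-s) / 2"
    by metis
  define F' where "F' = (\<Union>x\<in>F. G x)"
  have "finite F'" unfolding F'_def using F(1) G by auto
  moreover have "P0 \<subseteq> (\<Union>y\<in>F'. fst y)"
  proof
    fix k assume "k \<in> P0"
    then obtain x where x: "x \<in> F" "k \<in> fst x" using F(2) by blast
    then obtain y where "y \<in> G x" "k \<in> fst y" using G[OF x(1)] by blast
    then show "k \<in> (\<Union>y\<in>F'. fst y)" unfolding F'_def using x(1) by blast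
  qed
  moreover have "\<forall>y\<in>F'. good (N + Suc m) (fst y) (snd y) \<and> 2^(Suc m) \<le> snd y"
  proof
    fix y assume "y \<in> F'"
    then obtain x where x: "x \<in> F" "y \<in> G x" unfolding F'_def by blast
    then have "good (Suc (N+m)) (fst y) (snd y)" "2 * snd x \<le> snd y" using G[OF x(1)] by auto
    moreover have "2^m \<le> snd x" using F(3)[OF x(1)] by simp
    ultimately show "good (N + Suc m) (fst y) (snd y) \<and> 2^(Suc m) \<le> snd y" by simp
  qed
  moreover have "(\<Sum>y\<in>F'. snd y powr (-s)) \<le> (1/2)^(Suc m)"
  proof -
    have "(\<Sum>y\<in>F'. snd y powr (-s)) \<le> (\<Sum>x\<in>F. \<Sum>y\<in>G x. snd y powr (-s))"
      unfolding F'_def using F(1) G by (intro sum_UN_le_nonneg) auto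
    also have "\<dots> \<le> (\<Sum>x\<in>F. snd x powr (-s) / 2)" using G by (intro sum_mono) auto
    also have "\<dots> = (\<Sum>x\<in>F. snd x powr (-s)) / 2" by (simp add: sum_divide_distrib)
    also have "\<dots> \<le> (1/2)^m / 2" using F(4) by simp
    finally show ?thesis by simp
  qed
  ultimately show ?case by blast
qed

lemma bounded_A: "bounded A"
proof -
  have "A \<subseteq> cball 0 K" unfolding A_def using SK by auto
  then show ?thesis using bounded_cball bounded_subset by blast
qed

lemma piece_null:
  assumes g0: "good N P0 1"
  shows "hnull s P0"
proof (rule hnull_finite_cover)
  show "0 \<le> s" using s p by (smt (verit) divide_pos_pos)
  fix \<delta> e :: real assume d: "\<delta> > 0" and e: "e > 0"
  have s0: "s > 0" using s p by (smt (verit) divide_pos_pos)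
  have "0 < min (\<delta>/5) (e / 5 powr s)" using d e by simp
  then obtain m where m: "(1/2::real)^m < min (\<delta>/5) (e / 5 powr s)"
    using real_arch_pow_inv[of "min (\<delta>/5) (e / 5 powr s)" "1/2"] by auto
  then have m1: "5 * (1/2::real)^m \<le> \<delta>" and m2: "5 powr s * (1/2::real)^m \<le> e"
    by (auto simp: field_simps)
  obtain F where F: "finite F" "P0 \<subseteq> (\<Union>x\<in>F. fst x)"
    "\<And>x. x \<in> F \<Longrightarrow> good (N+m) (fst x) (snd x) \<and> 2^m \<le> snd x"
    "(\<Sum>x\<in>F. snd x powr (-s)) \<le> (1/2)^m" using iterate[OF g0, of m] by blast
  have props: "bounded (fst x) \<and> diameter (fst x) \<le> 5 / snd x \<and> 5 / snd x \<le> \<delta> \<and>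
      diam_pow s (fst x) \<le> 5 powr s * snd x powr (-s)" if xF: "x \<in> F" for x
  proof -
    have gx: "good (N+m) (fst x) (snd x)" and mx: "2^m \<le> snd x" using F(3)[OF xF] by auto
    have sub: "fst x \<subseteq> A" and l1: "1 \<le> snd x"
      and pr: "\<And>k k'. k \<in> fst x \<Longrightarrow> k' \<in> fst x \<Longrightarrow> snd x * norm (k - k') \<le> 5"
      using gx unfolding good_def by (auto intro: order.trans)
    have bd: "bounded (fst x)" using sub bounded_A bounded_subset by blast
    have dm: "diameter (fst x) \<le> 5 / snd x"
    proof (rule diameter_le)
      show "fst x \<noteq> {} \<or> 0 \<le> 5 / snd x" using l1 by simp
      fix k k' assume "k \<in> fst x" "k' \<in> fst x"
      then have "snd x * norm (k - k') \<le> 5" by (rule pr)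
      then show "norm (k - k') \<le> 5 / snd x" using l1 by (simp add: field_simps)
    qed
    have "5 / snd x \<le> 5 / 2^m" using mx l1 by (intro divide_left_mono) (auto intro: mult_pos_pos)
    also have "5 / (2::real)^m = 5 * (1/2)^m" by (simp add: power_one_over)
    finally have dl: "5 / snd x \<le> \<delta>" using m1 by linarith
    have "diam_pow s (fst x) \<le> (5 / snd x) powr s"
    proof (cases "fst x = {}")
      case True then show ?thesis by (simp add: diam_pow_def)
    next
      case False
      then have "diam_pow s (fst x) = diameter (fst x) powr s" using s0 by (simp add: diam_pow_def)
      also have "\<dots> \<le> (5 / snd x) powr s" using dm diameter_ge_0[OF bd] s0 by (intro powr_mono2) auto
      finally show ?thesis .
    qed
    also have "(5 / snd x) powr s = 5 powr s * snd x powr (-s)"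
      by (subst powr_divide) (simp add: powr_minus divide_inverse)
    finally show ?thesis using bd dm dl by simp
  qed
  show "\<exists>(I::(complex set \<times> real) set) V. finite I \<and> P0 \<subseteq> (\<Union>i\<in>I. V i) \<and>
       (\<forall>i\<in>I. bounded (V i) \<and> diameter (V i) \<le> \<delta>) \<and> (\<Sum>i\<in>I. diam_pow s (V i)) \<le> e"
  proof (intro exI[of _ F] exI[of _ fst] conjI)
    show "finite F" "P0 \<subseteq> (\<Union>i\<in>F. fst i)" using F by auto
    show "\<forall>i\<in>F. bounded (fst i) \<and> diameter (fst i) \<le> \<delta>" using props by (meson order.trans)
    have "(\<Sum>i\<in>F. diam_pow s (fst i)) \<le> (\<Sum>i\<in>F. 5 powr s * snd i powr (-s))"
      using props by (intro sum_mono) auto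
    also have "\<dots> = 5 powr s * (\<Sum>i\<in>F. snd i powr (-s))" by (simp add: sum_distrib_left)
    also have "\<dots> \<le> 5 powr s * (1/2)^m" using F(4) by (intro mult_left_mono) auto
    finally show "(\<Sum>i\<in>F. diam_pow s (fst i)) \<le> e" using m2 by linarith
  qed
qed

end

lemma R0_exists:
  fixes p s K :: real
  assumes p: "p > 1" and s: "s > 1 + 1/p" and K: "K \<ge> 0"
  shows "\<exists>R0. K < R0 \<and> K \<le> exp (R0/p) \<and> 8 \<le> exp (R0 - 5) \<and> R0 \<ge> 5 \<and>
     3 * exp (-((R0-5)*(1-1/p))) \<le> 1/4 \<and> 2592 * 4 powr s * exp 20 \<le> exp ((R0-5)*(s-1-1/p))"
proof -
  define c1 where "c1 = 1 - 1/p"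
  define c2 where "c2 = s - 1 - 1/p"
  define M where "M = 2592 * 4 powr s * exp (20::real)"
  have c1: "c1 > 0" unfolding c1_def using p by simp
  have c2: "c2 > 0" unfolding c2_def using s by simp
  have M: "M > 0" unfolding M_def by simp
  define T where "T = 8 + p*K + K + 12/c1 + M/c2"
  have pK: "0 \<le> p*K" using p K by simp
  have t1: "0 \<le> 12/c1" "0 \<le> M/c2" using c1 c2 M by auto
  have T8: "8 \<le> T" "p*K \<le> T" "K \<le> T" "12/c1 \<le> T" "M/c2 \<le> T"
    unfolding T_def using pK t1 K by linarith+
  define R0 where "R0 = 5 + T"
  have "K < R0" unfolding R0_def using T8 by linarith
  moreover have "K \<le> exp (R0/p)"
  proof -
    have "p * K \<le> R0" unfolding R0_def using T8 by linarith
    then have "K \<le> R0/p" using p by (simp add: field_simps)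
    moreover have "1 + R0/p \<le> exp (R0/p)" by (rule exp_ge_add_one_self)
    ultimately show ?thesis by linarith
  qed
  moreover have "8 \<le> exp (R0 - 5)"
  proof -
    have "1 + T \<le> exp T" by (rule exp_ge_add_one_self)
    then show ?thesis unfolding R0_def using T8 by (simp only: add_diff_cancel_left')
  qed
  moreover have "R0 \<ge> 5" unfolding R0_def using T8 by linarith
  moreover have "3 * exp (-((R0-5)*(1-1/p))) \<le> 1/4"
  proof -
    have "12/c1 * c1 \<le> T * c1" using T8 c1 by (intro mult_right_mono) auto
    then have "12 \<le> T * c1" using c1 by simp
    then have "12 \<le> exp (T * c1)" using exp_ge_add_one_self[of "T*c1"] by linarith
    then have "3 / exp (T * c1) \<le> 3 / 12" by (intro divide_left_mono) auto
    moreover have "(R0 - 5)*(1-1/p) = T*c1" by (simp add: R0_def c1_def)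
    moreover have "3 * exp (- (T*c1)) = 3 / exp (T * c1)" by (simp add: exp_minus divide_inverse)
    ultimately show ?thesis by simp
  qed
  moreover have "2592 * 4 powr s * exp 20 \<le> exp ((R0-5)*(s-1-1/p))"
  proof -
    have "M/c2 * c2 \<le> T * c2" using T8 c2 by (intro mult_right_mono) auto
    then have "M \<le> T * c2" using c2 by simp
    then have "M \<le> exp (T * c2)" using exp_ge_add_one_self[of "T*c2"] by linarith
    moreover have "(R0 - 5)*(s-1-1/p) = T*c2" by (simp add: R0_def c2_def)
    ultimately show ?thesis unfolding M_def by simp
  qed
  ultimately show ?thesis by (intro exI[of _ R0] conjI) assumption+
qed

lemma Preg_re:
  fixes z :: complex and p R :: real
  assumes "z \<in> P_region p" "p > 1" "norm z \<ge> 2 * \<bar>R\<bar> + 2"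
  shows "R \<le> Re z"
proof -
  have z: "0 < Re z" "\<bar>Im z\<bar> < Re z powr (1/p)" using assms(1) unfolding P_region_def by auto
  have n: "norm z \<le> Re z + \<bar>Im z\<bar>" using cmod_le[of z] z(1) by simp
  show ?thesis
  proof (cases "Re z \<ge> 1")
    case True
    have "Re z powr (1/p) \<le> Re z powr 1" using True assms(2) by (intro powr_mono) auto
    then have "Re z powr (1/p) \<le> Re z" using z(1) by simp
    then show ?thesis using n z assms(3) by linarith
  next
    case False
    have "Re z powr (1/p) \<le> 1 powr (1/p)" using False z(1) assms(2) by (intro powr_mono2) auto
    then have "Re z powr (1/p) \<le> 1" by simp
    then show ?thesis using n z assms(3) False by linarith
  qed
qed

lemma escape_re:
  assumes "filterlim (\<lambda>n. Eit n k) at_infinity sequentially" "\<forall>\<^sub>F n in sequentially. Eit n k \<in> P_region p" "p > 1"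
  shows "\<exists>N1. \<forall>n\<ge>N1. Eit n k \<in> P_region p \<and> R \<le> Re (Eit n k)"
proof -
  have "filterlim (\<lambda>n. norm (Eit n k)) at_top sequentially"
    using assms(1) by (rule filterlim_at_infinity_imp_norm_at_top)
  then have "\<forall>\<^sub>F n in sequentially. 2 * \<bar>R\<bar> + 2 \<le> norm (Eit n k)"
    by (simp add: filterlim_at_top)
  then have "\<forall>\<^sub>F n in sequentially. Eit n k \<in> P_region p \<and> R \<le> Re (Eit n k)"
    using assms(2) by eventually_elim (use Preg_re assms(3) in blast)
  then show ?thesis by (simp add: eventually_sequentially)
qed

lemma main_null:
  fixes p s :: real and \<Lambda> :: "complex set"
  assumes p: "p > 1" and b: "bounded \<Lambda>" and s: "s > 1 + 1/p"
  shows "hnull s (I_set p \<Lambda>)"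
proof -
  obtain K where K: "K > 0" "\<And>k. k \<in> \<Lambda> \<Longrightarrow> norm k \<le> K" using b unfolding bounded_pos by auto
  obtain R0 where R: "K < R0" "K \<le> exp (R0/p)" "8 \<le> exp (R0 - 5)" "R0 \<ge> 5"
     "3 * exp (-((R0-5)*(1-1/p))) \<le> 1/4" "2592 * 4 powr s * exp 20 \<le> exp ((R0-5)*(s-1-1/p))"
    using R0_exists[OF p s, of K] K(1) by auto
  have dy: "dyn p s K R0 \<Lambda>" for N :: nat
    unfolding dyn_def using p s K R by auto
  define AN where "AN N = {k\<in>\<Lambda>. \<forall>n\<ge>N. Eit n k \<in> P_region p \<and> R0 \<le> Re (Eit n k)}" for N
  define FN where "FN N = {ball c r | c r. r > 0 \<and> (\<forall>k\<in>ball c r. \<forall>k'\<in>ball c r.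
       norm (k - k') \<le> norm (Eit N k - Eit N k') \<and> norm (Eit N k - Eit N k') \<le> 5)}" for N
  have "\<exists>F'. F' \<subseteq> FN N \<and> countable F' \<and> \<Union>F' = \<Union>(FN N)" for N
  proof -
    have "\<And>S. S \<in> FN N \<Longrightarrow> open S" unfolding FN_def by auto
    then obtain F' where "F' \<subseteq> FN N" "countable F'" "\<Union>F' = \<Union>(FN N)" by (rule Lindelof)
    then show ?thesis by blast
  qed
  then obtain FN' where FN': "\<And>N. FN' N \<subseteq> FN N" "\<And>N. countable (FN' N)" "\<And>N. \<Union>(FN' N) = \<Union>(FN N)"
    by metis
  define \<A> where "\<A> = (\<Union>N. (\<lambda>B. AN N \<inter> B) ` FN' N)"
  have cA: "countable \<A>" unfolding \<A>_def using FN'(2) by auto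
  have nA: "hnull s X" if XA: "X \<in> \<A>" for X
  proof -
    obtain N B where NB: "B \<in> FN' N" "X = AN N \<inter> B" using XA unfolding \<A>_def by blast
    then obtain c r where B: "B = ball c r" "\<forall>k\<in>ball c r. \<forall>k'\<in>ball c r.
       norm (k - k') \<le> norm (Eit N k - Eit N k') \<and> norm (Eit N k - Eit N k') \<le> 5"
      using FN'(1) unfolding FN_def by blast
    interpret dyn p s K R0 \<Lambda> N by (rule dy)
    have AA: "A = AN N" unfolding A_def AN_def ..
    have "good N X 1" unfolding good_def AA NB(2) using B by auto
    then show ?thesis by (rule piece_null)
  qed
  have cov: "I_set p \<Lambda> \<subseteq> \<Union>\<A>"
  proof
    fix k assume kI: "k \<in> I_set p \<Lambda>"
    then have kL: "k \<in> \<Lambda>" and esc: "filterlim (\<lambda>n. Eit n k) at_infinity sequentially"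
      and dv: "filterlim (\<lambda>n. norm (deriv (Eit n) k)) at_top sequentially"
      and ev: "\<forall>\<^sub>F n in sequentially. Eit n k \<in> P_region p"
      unfolding I_set_def escaping_def by auto
    obtain N1 where N1: "\<forall>n\<ge>N1. Eit n k \<in> P_region p \<and> R0 \<le> Re (Eit n k)"
      using escape_re[OF esc ev p] by blast
    have "\<forall>\<^sub>F n in sequentially. 2 \<le> norm (Dd n k)"
      using dv unfolding deriv_Eit by (simp add: filterlim_at_top)
    then obtain N2 where N2: "\<forall>n\<ge>N2. 2 \<le> norm (Dd n k)" by (auto simp: eventually_sequentially)
    define N where "N = max N1 N2"
    have "2 \<le> norm (Dd N k)" using N2 unfolding N_def by simp
    then obtain r where r: "r > 0" "\<forall>k1\<in>ball k r. \<forall>k'\<in>ball k r.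
           norm (k1 - k') \<le> norm (Eit N k1 - Eit N k') \<and> norm (Eit N k1 - Eit N k') \<le> 5"
      using base_ball by blast
    then have "ball k r \<in> FN N" unfolding FN_def by blast
    moreover have "k \<in> ball k r" using r(1) by simp
    ultimately have "k \<in> \<Union>(FN N)" by (rule UnionI)
    then obtain B where B: "B \<in> FN' N" "k \<in> B" using FN'(3)[of N] by auto
    have "k \<in> AN N" unfolding AN_def using kL N1 N_def by auto
    then show "k \<in> \<Union>\<A>" unfolding \<A>_def using B by blast
  qed
  show ?thesis by (rule hnull_subset[OF hnull_countable_Union[OF cA nA] cov])
qed

theorem theorem3p2:
  fixes p :: real and \<Lambda> :: "complex set"
  assumes "p > 1" and "open \<Lambda>" and "bounded \<Lambda>"
  shows "hausdorff_dim (I_set p \<Lambda>) \<le> ereal (1 + 1 / p)"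
proof -
  let ?D = "{ereal s | s. 0 \<le> s \<and> hausdorff_outer s (I_set p \<Lambda>) = 0}"
  have mem: "Inf ?D \<le> ereal s" if sp: "s > 1 + 1/p" for s
  proof -
    have "hausdorff_outer s (I_set p \<Lambda>) = 0"
      using hnull_outer main_null[OF assms(1) assms(3) sp] by blast
    moreover have "0 \<le> s" using sp assms(1) by (smt (verit) divide_pos_pos)
    ultimately have "ereal s \<in> ?D" by blast
    then show ?thesis by (rule Inf_lower)
  qed
  have "Inf ?D \<le> ereal (1 + 1/p)"
  proof (rule dense_ge)
    fix y assume y: "ereal (1 + 1/p) < y"
    show "Inf ?D \<le> y"
    proof (cases y)
      case (real r)
      then show ?thesis using y mem by simp
    next
      case PInf then show ?thesis by simp
    next
      case MInf then show ?thesis using y by simp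
    qed
  qed
  then show ?thesis unfolding hausdorff_dim_def by simp
qed

end
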